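(* Let $V$ be a commutative unital quantale whose underlying lattice is a frame. If $(X,a,+)$ and $(Y,b,+)$ are $V$-groups and $f\colon X\to Y$ is a group homomorphism, then $f$ is a $V$-functor if and only if $a(0,x)\le b(0,f(x))$ for every $x\in X$.
   Context: A commutative unital quantale $V$ is a complete lattice with a commutative associative operation $\otimes$ with unit $k$ preserving arbitrary joins in each variable. A $V$-category $(X,a)$: $a\colon X\times X\to V$ with $k\le a(x,x)$ and $a(x,x')\otimes a(x',x'')\le a(x,x'')$. A $V$-functor $f\colon(X,a)\to(Y,b)$ satisfies $a(x,x')\le b(f(x),f(x'))$ for all $x,x'$. A $V$-group $(X,a,+)$ is a $V$-category with a group structure (additive, not necessarily abelian) such that $a(x_1,x_2)\otimes a(x_1',x_2')\le a(x_1+x_1',x_2+x_2')$. *)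

theory Defs
  imports Main
begin

definition comm_unital_quantale :: "('v::complete_lattice \<Rightarrow> 'v \<Rightarrow> 'v) \<Rightarrow> 'v \<Rightarrow> bool" where
  "comm_unital_quantale tns k \<longleftrightarrow>
     (\<forall>u v w. tns (tns u v) w = tns u (tns v w)) \<and>
     (\<forall>u v. tns u v = tns v u) \<and>
     (\<forall>u. tns k u = u \<and> tns u k = u) \<and>
     (\<forall>u S. tns u (Sup S) = Sup ((\<lambda>s. tns u s) ` S)) \<and>
     (\<forall>u S. tns (Sup S) u = Sup ((\<lambda>s. tns s u) ` S))"

definition is_frame :: "'v::complete_lattice itself \<Rightarrow> bool" where
  "is_frame _ \<longleftrightarrow> (\<forall>(u::'v) S. inf u (Sup S) = Sup ((\<lambda>s. inf u s) ` S))"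

definition V_category :: "('v::complete_lattice \<Rightarrow> 'v \<Rightarrow> 'v) \<Rightarrow> 'v \<Rightarrow> ('x \<Rightarrow> 'x \<Rightarrow> 'v) \<Rightarrow> bool" where
  "V_category tns k a \<longleftrightarrow>
     (\<forall>x. k \<le> a x x) \<and> (\<forall>x x' x''. tns (a x x') (a x' x'') \<le> a x x'')"

definition V_functor :: "('x \<Rightarrow> 'x \<Rightarrow> 'v::complete_lattice) \<Rightarrow> ('y \<Rightarrow> 'y \<Rightarrow> 'v) \<Rightarrow> ('x \<Rightarrow> 'y) \<Rightarrow> bool" where
  "V_functor a b f \<longleftrightarrow> (\<forall>x x'. a x x' \<le> b (f x) (f x'))"

definition V_group :: "('v::complete_lattice \<Rightarrow> 'v \<Rightarrow> 'v) \<Rightarrow> 'v \<Rightarrow> ('x::group_add \<Rightarrow> 'x \<Rightarrow> 'v) \<Rightarrow> bool" where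
  "V_group tns k a \<longleftrightarrow> V_category tns k a \<and>
     (\<forall>x1 x2 x1' x2'. tns (a x1 x2) (a x1' x2') \<le> a (x1 + x1') (x2 + x2'))"

definition group_hom :: "('x::group_add \<Rightarrow> 'y::group_add) \<Rightarrow> bool" where
  "group_hom f \<longleftrightarrow> (\<forall>x y. f (x + y) = f x + f y)"

end

theory Submission
  imports Defs
begin

lemma tns_mono_left:
  fixes tns :: "'v::complete_lattice \<Rightarrow> 'v \<Rightarrow> 'v"
  assumes q: "comm_unital_quantale tns k" and uv: "u \<le> v"
  shows "tns u w \<le> tns v w"
proof -
  have "Sup {u, v} = v" using uv by (simp add: sup_absorb2)
  hence "tns v w = Sup ((\<lambda>s. tns s w) ` {u, v})"
    using q unfolding comm_unital_quantale_def by metis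
  thus ?thesis by (metis image_insert image_empty Sup_insert Sup_empty sup_bot_right sup_ge1)
qed

theorem corollary3p3:
  fixes tns :: "'v::complete_lattice \<Rightarrow> 'v \<Rightarrow> 'v" and k :: 'v
    and a :: "'x::group_add \<Rightarrow> 'x \<Rightarrow> 'v" and b :: "'y::group_add \<Rightarrow> 'y \<Rightarrow> 'v"
    and f :: "'x \<Rightarrow> 'y"
  assumes "comm_unital_quantale tns k"
    and "is_frame TYPE('v)"
    and "V_group tns k a"
    and "V_group tns k b"
    and "group_hom f"
  shows "V_functor a b f \<longleftrightarrow> (\<forall>x. a 0 x \<le> b 0 (f x))"
proof
  have f0: "f 0 = 0" using assms(5) unfolding group_hom_def
    by (metis add.right_neutral add_left_cancel)
  show "V_functor a b f \<Longrightarrow> \<forall>x. a 0 x \<le> b 0 (f x)"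
    unfolding V_functor_def by (metis f0)
next
  assume H: "\<forall>x. a 0 x \<le> b 0 (f x)"
  have unit: "\<And>u. tns k u = u" using assms(1) unfolding comm_unital_quantale_def by blast
  have ka: "\<And>x. k \<le> a x x" and ga: "\<And>x1 x2 x1' x2'. tns (a x1 x2) (a x1' x2') \<le> a (x1 + x1') (x2 + x2')"
    using assms(3) unfolding V_group_def V_category_def by blast+
  have kb: "\<And>x. k \<le> b x x" and gb: "\<And>x1 x2 x1' x2'. tns (b x1 x2) (b x1' x2') \<le> b (x1 + x1') (x2 + x2')"
    using assms(4) unfolding V_group_def V_category_def by blast+
  have hom: "\<And>x y. f (x + y) = f x + f y" using assms(5) unfolding group_hom_def by blast
  show "V_functor a b f" unfolding V_functor_def
  proof (intro allI)
    fix x x' :: 'x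
    have "a x x' = tns k (a x x')" by (simp add: unit)
    also have "\<dots> \<le> tns (a (-x) (-x)) (a x x')" by (rule tns_mono_left[OF assms(1) ka])
    also have "\<dots> \<le> a (-x + x) (-x + x')" by (rule ga)
    also have "\<dots> = a 0 (-x + x')" by simp
    also have "\<dots> \<le> b 0 (f (-x + x'))" using H by blast
    also have "\<dots> = tns k (b 0 (f (-x + x')))" by (simp add: unit)
    also have "\<dots> \<le> tns (b (f x) (f x)) (b 0 (f (-x + x')))" by (rule tns_mono_left[OF assms(1) kb])
    also have "\<dots> \<le> b (f x + 0) (f x + f (-x + x'))" by (rule gb)
    also have "\<dots> = b (f x) (f x')" by (simp add: hom[symmetric] add.assoc[symmetric])
    finally show "a x x' \<le> b (f x) (f x')" .
  qed
qed

end
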